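(* Let $N\ge2$, $d\ge1$, let $E\subset\mathbb{Z}_N^d$, and let $\Sigma\subset\mathbb{Z}_N^d$ be a nonempty Salem set at level $\Lambda_{\text{Salem}}>0$. Then for every nonzero $f:\mathbb{Z}_N^d\to\mathbb{C}$ supported in $E$ whose Fourier transform $\hat f$ is supported in $\Sigma$, $$|E|\cdot|\Sigma|^{3/4}\ \ge\ N^d\sqrt{\frac{1-\mathrm{dens}(\Sigma)}{\Lambda_{\text{Salem}}}},$$ where $\mathrm{dens}(\Sigma)=N^{-d}|\Sigma|$.
   Context: $\chi(t)=e^{2\pi i t/N}$, $\hat f(m)=N^{-d}\sum_{x\in\mathbb{Z}_N^d}\chi(-x\cdot m)f(x)$. For a set $S$ we identify $S$ with its indicator function, so $\hat S(z)=N^{-d}\sum_{x\in S}\chi(-x\cdot z)$. A set $S\subset\mathbb{Z}_N^d$ is a Salem set at level $\Lambda_{\text{Salem}}$ if $|\hat S(z)|\le \Lambda_{\text{Salem}}N^{-d}|S|^{1/2}$ for all $z\ne 0$. *)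

theory Defs
  imports "HOL-Analysis.Analysis"
begin

text \<open>Z_N^d is represented by integer vectors x : nat => int with 0 <= x i < N for i < d
  and x i = 0 for i >= d (canonical representatives).\<close>
definition ZNd :: "nat \<Rightarrow> nat \<Rightarrow> (nat \<Rightarrow> int) set" where
  "ZNd N d = {x. (\<forall>i<d. 0 \<le> x i \<and> x i < int N) \<and> (\<forall>i\<ge>d. x i = 0)}"

definition dotp :: "nat \<Rightarrow> (nat \<Rightarrow> int) \<Rightarrow> (nat \<Rightarrow> int) \<Rightarrow> int" where
  "dotp d x m = (\<Sum>i<d. x i * m i)"

definition chi :: "nat \<Rightarrow> int \<Rightarrow> complex" where
  "chi N t = cis (2 * pi * real_of_int t / real N)"

definition fourier :: "nat \<Rightarrow> nat \<Rightarrow> ((nat \<Rightarrow> int) \<Rightarrow> complex) \<Rightarrow> (nat \<Rightarrow> int) \<Rightarrow> complex" where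
  "fourier N d f m = (1 / of_nat N ^ d) * (\<Sum>x\<in>ZNd N d. chi N (- dotp d x m) * f x)"

definition set_fourier :: "nat \<Rightarrow> nat \<Rightarrow> (nat \<Rightarrow> int) set \<Rightarrow> (nat \<Rightarrow> int) \<Rightarrow> complex" where
  "set_fourier N d S = fourier N d (\<lambda>x. if x \<in> S then 1 else 0)"

definition salem_set :: "nat \<Rightarrow> nat \<Rightarrow> real \<Rightarrow> (nat \<Rightarrow> int) set \<Rightarrow> bool" where
  "salem_set N d \<Lambda> S \<longleftrightarrow> S \<subseteq> ZNd N d \<and>
     (\<forall>z\<in>ZNd N d. z \<noteq> (\<lambda>_. 0) \<longrightarrow>
        cmod (set_fourier N d S z) \<le> \<Lambda> * (1 / real N ^ d) * sqrt (real (card S)))"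

definition dens :: "nat \<Rightarrow> nat \<Rightarrow> (nat \<Rightarrow> int) set \<Rightarrow> real" where
  "dens N d S = real (card S) / real N ^ d"

end

theory Submission
  imports Defs
begin

lemma chi_add: "chi N (a + b) = chi N a * chi N b"
  unfolding chi_def by (simp add: cis_mult add_divide_distrib distrib_left)

lemma chi_mult_N: "N > 0 \<Longrightarrow> chi N (k * int N) = 1"
proof -
  assume "N > 0"
  hence "2 * pi * real_of_int (k * int N) / real N = 2 * pi * real_of_int k" by simp
  thus ?thesis unfolding chi_def by simp
qed

lemma chi_cong: "N > 0 \<Longrightarrow> a mod int N = b mod int N \<Longrightarrow> chi N a = chi N b"
proof -
  assume N: "N > 0" and c: "a mod int N = b mod int N"
  then obtain k where "a = b + k * int N"
  proof -
    have "int N dvd (a - b)" using c by (simp add: mod_eq_dvd_iff)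
    then obtain k where "a - b = int N * k" by (auto simp: dvd_def)
    thus ?thesis using that[of k] by (simp add: algebra_simps)
  qed
  thus ?thesis using chi_add chi_mult_N[OF N] by simp
qed

lemma chi_ne1: "N > 0 \<Longrightarrow> \<not> int N dvd t \<Longrightarrow> chi N t \<noteq> 1"
proof
  assume N: "N > 0" and nd: "\<not> int N dvd t" and e: "chi N t = 1"
  have "cos (2 * pi * real_of_int t / real N) = 1"
    using arg_cong[OF e, of Re] unfolding chi_def by simp
  then obtain n::int where "2 * pi * real_of_int t / real N = of_int n * 2 * pi"
    using cos_one_2pi_int by blast
  hence "real_of_int t = real_of_int n * real N" using N by (simp add: field_simps)
  hence "t = n * int N" by (metis of_int_eq_iff of_int_mult of_int_of_nat_eq)
  thus False using nd by simp
qed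

lemma norm_chi[simp]: "cmod (chi N t) = 1" unfolding chi_def by simp


lemma ZNd_PiE: "ZNd N d = (\<lambda>p i. if i < d then p i else 0) ` (PiE {..<d} (\<lambda>_. {0..<int N}))"
(is "?L = ?R")
proof
  show "?L \<subseteq> ?R"
  proof
    fix x assume x: "x \<in> ZNd N d"
    have "x = (\<lambda>i. if i < d then restrict x {..<d} i else 0)"
      using x unfolding ZNd_def by (auto simp: fun_eq_iff)
    moreover have "restrict x {..<d} \<in> PiE {..<d} (\<lambda>_. {0..<int N})"
      using x unfolding ZNd_def by auto
    ultimately show "x \<in> ?R" by blast
  qed
  show "?R \<subseteq> ?L" unfolding ZNd_def by (auto simp: PiE_def Pi_def)
qed

lemma inj_ZNd_PiE: "inj_on (\<lambda>p i. if i < d then p i else 0) (PiE {..<d} (\<lambda>_. {0..<int N}))"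
proof (rule inj_onI)
  fix p q assume p: "p \<in> PiE {..<d} (\<lambda>_. {0..<int N})" and q: "q \<in> PiE {..<d} (\<lambda>_. {0..<int N})"
    and e: "(\<lambda>i. if i < d then p i else 0) = (\<lambda>i. if i < d then q i else 0)"
  show "p = q"
  proof
    fix i show "p i = q i"
    proof (cases "i < d")
      case True then show ?thesis using fun_cong[OF e, of i] by simp
    next
      case False then show ?thesis using p q by (auto simp: PiE_def extensional_def)
    qed
  qed
qed

lemma card_ZNd: "card (ZNd N d) = N ^ d"
  unfolding ZNd_PiE by (simp add: card_image[OF inj_ZNd_PiE] card_PiE)

lemma finite_ZNd: "finite (ZNd N d)"
  unfolding ZNd_PiE by (simp add: finite_PiE)

lemma dotp_cong:
  assumes "\<And>j. j < d \<Longrightarrow> a j mod int N = b j mod int N"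
  shows "dotp d u a mod int N = dotp d u b mod int N"
proof -
  have "dotp d u a mod int N = (\<Sum>i<d. u i * a i mod int N) mod int N"
    unfolding dotp_def by (simp add: mod_sum_eq)
  also have "(\<Sum>i<d. u i * a i mod int N) = (\<Sum>i<d. u i * b i mod int N)"
    by (rule sum.cong) (auto simp: assms intro: mod_mult_right_eq[THEN trans, symmetric] simp del: mod_mult_right_eq, metis assms mod_mult_right_eq)
  also have "(\<Sum>i<d. u i * b i mod int N) mod int N = dotp d u b mod int N"
    unfolding dotp_def by (simp add: mod_sum_eq)
  finally show ?thesis .
qed

lemma dotp_upd: "i < d \<Longrightarrow> dotp d u (m(i := v)) = dotp d u m + u i * (v - m i)"
proof -
  assume i: "i < d"
  have "dotp d u (m(i := v)) = (\<Sum>j<d. u j * m j + (if j = i then u i * (v - m i) else 0))"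
    unfolding dotp_def by (rule sum.cong) (auto simp: algebra_simps)
  also have "\<dots> = dotp d u m + u i * (v - m i)"
    unfolding dotp_def sum.distrib using i by simp
  finally show ?thesis .
qed


lemma orth:
  assumes N: "N > 0" and i: "i < d" and nd: "\<not> int N dvd u i"
  shows "(\<Sum>m\<in>ZNd N d. chi N (dotp d u m)) = 0"
proof -
  define g where "g = (\<lambda>m::nat\<Rightarrow>int. m(i := (m i + 1) mod int N))"
  define h where "h = (\<lambda>m::nat\<Rightarrow>int. m(i := (m i - 1) mod int N))"
  have bij: "bij_betw g (ZNd N d) (ZNd N d)"
  proof (rule bij_betw_byWitness[where f'=h])
    show "\<forall>a\<in>ZNd N d. h (g a) = a"
    proof
      fix a assume a: "a \<in> ZNd N d"
      hence "0 \<le> a i" "a i < int N" using i unfolding ZNd_def by auto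
      hence "((a i + 1) mod int N - 1) mod int N = a i"
        by (metis add_diff_cancel_right' mod_diff_left_eq mod_pos_pos_trivial)
      thus "h (g a) = a" unfolding g_def h_def by auto
    qed
    show "\<forall>a\<in>ZNd N d. g (h a) = a"
    proof
      fix a assume a: "a \<in> ZNd N d"
      hence "0 \<le> a i" "a i < int N" using i unfolding ZNd_def by auto
      hence "((a i - 1) mod int N + 1) mod int N = a i"
        by (metis diff_add_cancel mod_add_left_eq mod_pos_pos_trivial)
      thus "g (h a) = a" unfolding g_def h_def by auto
    qed
    show "g ` ZNd N d \<subseteq> ZNd N d" using N i unfolding g_def ZNd_def by auto
    show "h ` ZNd N d \<subseteq> ZNd N d" using N i unfolding h_def ZNd_def by auto
  qed
  have key: "chi N (dotp d u (g m)) = chi N (u i) * chi N (dotp d u m)" for m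
  proof -
    have "dotp d u (g m) mod int N = dotp d u (m(i := m i + 1)) mod int N"
      by (rule dotp_cong) (auto simp: g_def)
    also have "dotp d u (m(i := m i + 1)) = u i + dotp d u m"
      using dotp_upd[OF i] by simp
    finally show ?thesis using chi_cong[OF N] chi_add by metis
  qed
  define S where "S = (\<Sum>m\<in>ZNd N d. chi N (dotp d u m))"
  have "S = (\<Sum>m\<in>ZNd N d. chi N (dotp d u (g m)))"
    unfolding S_def using sum.reindex_bij_betw[OF bij, of "\<lambda>m. chi N (dotp d u m)"] by simp
  also have "\<dots> = chi N (u i) * S" unfolding S_def key by (simp add: sum_distrib_left)
  finally have "(1 - chi N (u i)) * S = 0" by (simp add: algebra_simps)
  moreover have "1 - chi N (u i) \<noteq> 0" using chi_ne1[OF N nd] by simp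
  ultimately show ?thesis unfolding S_def by simp
qed


lemma dotp_diff: "dotp d (\<lambda>i. x i - y i) m = dotp d x m - dotp d y m"
  unfolding dotp_def by (simp add: algebra_simps sum_subtractf)

lemma swap_sum:
  fixes T :: "(nat \<Rightarrow> int) set"
  shows "(\<Sum>m\<in>T. chi N (dotp d x m) * fourier N d f m) =
    (1 / of_nat N ^ d) * (\<Sum>y\<in>ZNd N d. f y * (\<Sum>m\<in>T. chi N (dotp d (\<lambda>i. x i - y i) m)))"
proof -
  have "(\<Sum>m\<in>T. chi N (dotp d x m) * fourier N d f m) =
     (1 / of_nat N ^ d) * (\<Sum>m\<in>T. \<Sum>y\<in>ZNd N d. f y * chi N (dotp d (\<lambda>i. x i - y i) m))"
  proof -
    have eq: "chi N (dotp d x m) * (chi N (- dotp d y m) * f y) = f y * chi N (dotp d (\<lambda>i. x i - y i) m)" for m y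
      unfolding dotp_diff by (simp add: chi_add[symmetric])
    have "(\<Sum>m\<in>T. chi N (dotp d x m) * fourier N d f m) =
       (\<Sum>m\<in>T. (1 / of_nat N ^ d) * (\<Sum>y\<in>ZNd N d. chi N (dotp d x m) * (chi N (- dotp d y m) * f y)))"
      unfolding fourier_def sum_distrib_left by (simp add: mult.assoc mult.left_commute)
    also have "\<dots> = (1 / of_nat N ^ d) * (\<Sum>m\<in>T. \<Sum>y\<in>ZNd N d. f y * chi N (dotp d (\<lambda>i. x i - y i) m))"
      unfolding eq by (simp add: sum_distrib_left)
    finally show ?thesis .
  qed
  also have "\<dots> = (1 / of_nat N ^ d) * (\<Sum>y\<in>ZNd N d. f y * (\<Sum>m\<in>T. chi N (dotp d (\<lambda>i. x i - y i) m)))"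
    by (simp add: sum.swap[of _ T] sum_distrib_left)
  finally show ?thesis .
qed

lemma ZNd_diff_ndvd:
  assumes x: "x \<in> ZNd N d" and y: "y \<in> ZNd N d" and ne: "x \<noteq> y"
  obtains i where "i < d" "\<not> int N dvd (x i - y i)"
proof -
  obtain i where xi: "x i \<noteq> y i" using ne by auto
  have id: "i < d"
  proof (rule ccontr)
    assume "\<not> i < d"
    hence "x i = 0" "y i = 0" using x y unfolding ZNd_def by auto
    thus False using xi by simp
  qed
  have b: "0 \<le> x i" "x i < int N" "0 \<le> y i" "y i < int N" using x y id unfolding ZNd_def by auto
  have "\<not> int N dvd (x i - y i)"
  proof
    assume "int N dvd (x i - y i)"
    hence "\<bar>int N\<bar> \<le> \<bar>x i - y i\<bar>" using xi by (intro dvd_imp_le_int) auto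
    thus False using b by linarith
  qed
  thus ?thesis using that id by blast
qed

lemma inversion:
  assumes N: "N > 0" and x: "x \<in> ZNd N d"
  shows "(\<Sum>m\<in>ZNd N d. chi N (dotp d x m) * fourier N d f m) = f x"
proof -
  have inner: "(\<Sum>m\<in>ZNd N d. chi N (dotp d (\<lambda>i. x i - y i) m)) =
      (if y = x then of_nat N ^ d else 0)" if y: "y \<in> ZNd N d" for y
  proof (cases "y = x")
    case True
    have "dotp d (\<lambda>i. x i - y i) m = 0" for m using True unfolding dotp_def by simp
    hence "(\<Sum>m\<in>ZNd N d. chi N (dotp d (\<lambda>i. x i - y i) m)) = of_nat (card (ZNd N d))"
      by (simp add: chi_def)
    thus ?thesis using True card_ZNd by simp
  next
    case False
    then obtain i where "i < d" "\<not> int N dvd (x i - y i)" using ZNd_diff_ndvd[OF x y] by metis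
    thus ?thesis using orth[OF N, of i d "\<lambda>i. x i - y i"] False by simp
  qed
  have "(\<Sum>m\<in>ZNd N d. chi N (dotp d x m) * fourier N d f m) =
     (1 / of_nat N ^ d) * (\<Sum>y\<in>ZNd N d. f y * (if y = x then of_nat N ^ d else 0))"
    unfolding swap_sum by (simp add: inner)
  also have "\<dots> = f x" using x N by (simp add: if_distrib sum.delta finite_ZNd cong: if_cong)
  finally show ?thesis .
qed


lemma kernel_bound:
  assumes N: "N > 0" and x: "x \<in> ZNd N d" and y: "y \<in> ZNd N d" and ne: "y \<noteq> x"
    and sal: "salem_set N d \<Lambda> S"
  shows "cmod (\<Sum>m\<in>S. chi N (dotp d (\<lambda>i. x i - y i) m)) \<le> \<Lambda> * sqrt (real (card S))"
proof -
  have SZ: "S \<subseteq> ZNd N d" using sal unfolding salem_set_def by simp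
  define z where "z = (\<lambda>i. if i < d then (y i - x i) mod int N else 0)"
  have zZ: "z \<in> ZNd N d" unfolding z_def ZNd_def using N by auto
  have zne: "z \<noteq> (\<lambda>_. 0)"
  proof
    assume z0: "z = (\<lambda>_. 0)"
    obtain i where i: "i < d" "\<not> int N dvd (y i - x i)" using ZNd_diff_ndvd[OF y x ne] by metis
    have "(y i - x i) mod int N = 0" using fun_cong[OF z0, of i] i unfolding z_def by simp
    thus False using i by auto
  qed
  have bnd: "cmod (set_fourier N d S z) \<le> \<Lambda> * (1 / real N ^ d) * sqrt (real (card S))"
    using sal zZ zne unfolding salem_set_def by blast
  have trm: "chi N (- dotp d m z) = chi N (dotp d (\<lambda>i. x i - y i) m)" for m
  proof -
    have "- dotp d m z = dotp d (\<lambda>i. - m i) z" unfolding dotp_def by (simp add: sum_negf)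
    moreover have "dotp d (\<lambda>i. - m i) z mod int N = dotp d (\<lambda>i. - m i) (\<lambda>i. y i - x i) mod int N"
      by (rule dotp_cong) (simp add: z_def)
    moreover have "dotp d (\<lambda>i. - m i) (\<lambda>i. y i - x i) = dotp d (\<lambda>i. x i - y i) m"
      unfolding dotp_def by (rule sum.cong) (auto simp: algebra_simps)
    ultimately show ?thesis using chi_cong[OF N] by metis
  qed
  have "set_fourier N d S z = (1 / of_nat N ^ d) * (\<Sum>m\<in>S. chi N (dotp d (\<lambda>i. x i - y i) m))"
  proof -
    have "(\<Sum>m\<in>ZNd N d. chi N (- dotp d m z) * (if m \<in> S then 1 else 0)) = (\<Sum>m\<in>S. chi N (- dotp d m z))"
      using SZ finite_ZNd by (simp add: sum.If_cases Int_absorb1 mult.commute[of _ "if _ then _ else _"] if_distrib cong: if_cong)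
    thus ?thesis unfolding set_fourier_def fourier_def trm by simp
  qed
  hence "cmod (\<Sum>m\<in>S. chi N (dotp d (\<lambda>i. x i - y i) m)) = real N ^ d * cmod (set_fourier N d S z)"
    using N by (simp add: norm_mult norm_divide norm_power)
  also have "\<dots> \<le> real N ^ d * (\<Lambda> * (1 / real N ^ d) * sqrt (real (card S)))"
    using bnd by (intro mult_left_mono) auto
  also have "\<dots> = \<Lambda> * sqrt (real (card S))" using N by simp
  finally show ?thesis .
qed


theorem theorem3:
  fixes N d :: nat and E \<Sigma> :: "(nat \<Rightarrow> int) set" and \<Lambda> :: real
    and f :: "(nat \<Rightarrow> int) \<Rightarrow> complex"
  assumes "N \<ge> 2" and "d \<ge> 1"
    and "E \<subseteq> ZNd N d" and "\<Sigma> \<subseteq> ZNd N d" and "\<Sigma> \<noteq> {}"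
    and "\<Lambda> > 0" and "salem_set N d \<Lambda> \<Sigma>"
    and "\<exists>x\<in>ZNd N d. f x \<noteq> 0"
    and "\<forall>x\<in>ZNd N d. x \<notin> E \<longrightarrow> f x = 0"
    and "\<forall>m\<in>ZNd N d. m \<notin> \<Sigma> \<longrightarrow> fourier N d f m = 0"
  shows "real (card E) * real (card \<Sigma>) powr (3/4)
           \<ge> real N ^ d * sqrt ((1 - dens N d \<Sigma>) / \<Lambda>)"
proof -
  note A = assms
  have N: "N > 0" using A(1) by simp
  define Z where "Z = ZNd N d"
  have fZ: "finite Z" unfolding Z_def by (rule finite_ZNd)
  have fE: "finite E" using A(3) fZ finite_subset Z_def by blast
  have fS: "finite \<Sigma>" using A(4) fZ finite_subset Z_def by blast
  define n where "n = real N ^ d"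
  have npos: "n > 0" unfolding n_def using N by simp
  define e where "e = real (card E)"
  define s where "s = real (card \<Sigma>)"
  have spos: "s > 0" unfolding s_def using fS A(5) by (simp add: card_gt_0_iff)
  define M where "M = Max ((\<lambda>x. cmod (f x)) ` Z)"
  have Zne: "Z \<noteq> {}" using A(8) Z_def by auto
  have "M \<in> (\<lambda>x. cmod (f x)) ` Z" unfolding M_def using fZ Zne by simp
  then obtain x0 where x0: "x0 \<in> Z" "cmod (f x0) = M" by auto
  have Mge: "cmod (f y) \<le> M" if "y \<in> Z" for y unfolding M_def using fZ that by simp
  have Mpos: "M > 0"
  proof -
    obtain x where "x \<in> Z" "f x \<noteq> 0" using A(8) Z_def by auto
    thus ?thesis using Mge[of x] by (metis zero_less_norm_iff order_less_le_trans)
  qed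
  define SA where "SA = (\<Sum>x\<in>Z. cmod (f x))"
  have SA: "SA \<le> e * M"
  proof -
    have "SA = (\<Sum>x\<in>E. cmod (f x))" unfolding SA_def
      by (rule sum.mono_neutral_right) (use fZ A(3,9) Z_def in auto)
    also have "\<dots> \<le> (\<Sum>x\<in>E. M)" by (rule sum_mono) (use Mge A(3) Z_def in auto)
    finally show ?thesis unfolding e_def by simp
  qed
  have inv: "f x = (\<Sum>m\<in>\<Sigma>. chi N (dotp d x m) * fourier N d f m)" if "x \<in> Z" for x
  proof -
    have "f x = (\<Sum>m\<in>Z. chi N (dotp d x m) * fourier N d f m)"
      using inversion[OF N] that Z_def by simp
    also have "\<dots> = (\<Sum>m\<in>\<Sigma>. chi N (dotp d x m) * fourier N d f m)"
      by (rule sum.mono_neutral_right) (use fZ A(4,10) Z_def in auto)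
    finally show ?thesis .
  qed
  have Fb: "cmod (fourier N d f m) \<le> e * M / n" for m
  proof -
    have "cmod (fourier N d f m) = (1 / n) * cmod (\<Sum>x\<in>Z. chi N (- dotp d x m) * f x)"
      unfolding fourier_def Z_def n_def by (simp add: norm_mult norm_divide norm_power)
    also have "\<dots> \<le> (1 / n) * SA"
    proof -
      have "cmod (\<Sum>x\<in>Z. chi N (- dotp d x m) * f x) \<le> (\<Sum>x\<in>Z. cmod (chi N (- dotp d x m) * f x))"
        by (rule norm_sum)
      also have "\<dots> = SA" unfolding SA_def by (simp add: norm_mult)
      finally show ?thesis using npos by (simp add: divide_right_mono)
    qed
    also have "\<dots> \<le> (1 / n) * (e * M)" using SA npos by (simp add: divide_right_mono)
    finally show ?thesis by simp
  qed
  have bA: "n \<le> s * e"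
  proof -
    have "M = cmod (\<Sum>m\<in>\<Sigma>. chi N (dotp d x0 m) * fourier N d f m)" using inv[OF x0(1)] x0(2) by simp
    also have "\<dots> \<le> (\<Sum>m\<in>\<Sigma>. cmod (chi N (dotp d x0 m) * fourier N d f m))" by (rule norm_sum)
    also have "\<dots> \<le> (\<Sum>m\<in>\<Sigma>. e * M / n)" by (rule sum_mono) (simp add: norm_mult Fb)
    also have "\<dots> = s * (e * M / n)" unfolding s_def by simp
    finally have "M * n \<le> s * e * M" using npos by (simp add: field_simps)
    thus ?thesis using Mpos by (simp add: mult.commute)
  qed
  define K where "K = (\<lambda>y. \<Sum>m\<in>\<Sigma>. chi N (dotp d (\<lambda>i. x0 i - y i) m))"
  have Kx0: "K x0 = of_real s" unfolding K_def s_def dotp_def by (simp add: chi_def)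
  have Kb: "cmod (K y) \<le> \<Lambda> * sqrt s" if "y \<in> Z" "y \<noteq> x0" for y
    unfolding K_def s_def using kernel_bound[OF N _ _ _ A(7)] x0(1) that Z_def by blast
  have "f x0 = (1 / of_nat N ^ d) * (\<Sum>y\<in>Z. f y * K y)"
    using inv[OF x0(1)] swap_sum Z_def K_def by simp
  hence "of_real n * f x0 = (\<Sum>y\<in>Z. f y * K y)" unfolding n_def using N by simp
  also have "\<dots> = f x0 * of_real s + (\<Sum>y\<in>Z - {x0}. f y * K y)"
    using sum.remove[OF fZ x0(1), of "\<lambda>y. f y * K y"] Kx0 by simp
  finally have eqB: "of_real (n - s) * f x0 = (\<Sum>y\<in>Z - {x0}. f y * K y)"
    by (simp add: algebra_simps)
  have bB: "n - s \<le> \<Lambda> * sqrt s * e"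
  proof -
    have "(n - s) * M \<le> \<bar>n - s\<bar> * M" using Mpos by (simp add: mult_right_mono)
    also have "\<dots> = cmod (of_real (n - s) * f x0)" using x0(2) by (simp add: norm_mult del: of_real_diff)
    also have "\<dots> \<le> (\<Sum>y\<in>Z - {x0}. cmod (f y * K y))" unfolding eqB by (rule norm_sum)
    also have "\<dots> \<le> (\<Sum>y\<in>Z - {x0}. cmod (f y) * (\<Lambda> * sqrt s))"
      by (rule sum_mono) (simp add: norm_mult Kb mult_left_mono)
    also have "\<dots> \<le> (\<Sum>y\<in>Z. cmod (f y) * (\<Lambda> * sqrt s))"
      by (rule sum_mono2) (use fZ A(6) spos in auto)
    also have "\<dots> = SA * (\<Lambda> * sqrt s)" unfolding SA_def by (simp add: sum_distrib_right)
    also have "\<dots> \<le> (e * M) * (\<Lambda> * sqrt s)" using SA A(6) spos by (intro mult_right_mono) auto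
    finally have "(n - s) * M \<le> (\<Lambda> * sqrt s * e) * M" by (simp add: algebra_simps)
    thus ?thesis using Mpos by simp
  qed
  have dens: "dens N d \<Sigma> = s / n" unfolding dens_def s_def n_def by simp
  show ?thesis
  proof (cases "1 - s / n < 0")
    case True
    hence "(1 - s / n) / \<Lambda> \<le> 0" using A(6) by (intro divide_nonpos_pos) auto
    hence "sqrt ((1 - s / n) / \<Lambda>) \<le> 0" by simp
    moreover have "0 \<le> e * s powr (3/4)" unfolding e_def by simp
    ultimately show ?thesis unfolding dens e_def s_def n_def[symmetric]
      by (metis mult_nonneg_nonpos npos less_le order_trans)
  next
    case False
    hence ns: "n - s \<ge> 0" using npos by (simp add: field_simps)
    have e0: "e \<ge> 0" unfolding e_def by simp
    have prod: "n * (n - s) \<le> (s * e) * (\<Lambda> * sqrt s * e)"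
      using mult_mono[OF bA bB] ns npos spos e0 by simp
    have sp: "s powr (3/4) = sqrt (s * sqrt s)"
    proof -
      have "s * sqrt s = s powr (3/2)"
      proof -
        have "s powr (3/2) = s powr (1 + 1/2)" by simp
        also have "\<dots> = s powr 1 * s powr (1/2)" by (rule powr_add)
        finally show ?thesis using spos by (simp add: powr_half_sqrt)
      qed
      thus ?thesis using spos by (simp add: powr_half_sqrt[symmetric] powr_powr)
    qed
    have "n * sqrt ((1 - s / n) / \<Lambda>) = sqrt (n * (n - s) / \<Lambda>)"
    proof -
      have "n * sqrt ((1 - s / n) / \<Lambda>) = sqrt (n^2) * sqrt ((1 - s / n) / \<Lambda>)" using npos by simp
      also have "\<dots> = sqrt (n^2 * ((1 - s / n) / \<Lambda>))" by (rule real_sqrt_mult[symmetric])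
      also have "n^2 * ((1 - s / n) / \<Lambda>) = n * (n - s) / \<Lambda>"
        using npos A(6) by (simp add: power2_eq_square field_simps)
      finally show ?thesis .
    qed
    also have "\<dots> \<le> sqrt ((s * e) * (\<Lambda> * sqrt s * e) / \<Lambda>)"
      using prod A(6) by (intro real_sqrt_le_mono divide_right_mono) auto
    also have "(s * e) * (\<Lambda> * sqrt s * e) / \<Lambda> = e^2 * (s * sqrt s)"
      using A(6) by (simp add: power2_eq_square field_simps)
    also have "sqrt (e^2 * (s * sqrt s)) = e * s powr (3/4)"
      using e0 by (simp add: sp real_sqrt_mult)
    finally show ?thesis unfolding dens e_def s_def n_def .
  qed
qed

end
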